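(* Let $r\geqslant 2$, $n\geqslant 2r-1$, and let $\pi,\sigma\in\mathrm{Sym}_n$ with $w_H(\pi)=2r-1$ and $w_H(\sigma)=r$. Then $\sigma\in N_3(\pi)$ if and only if the following holds. There is exactly one non-trivial cycle of $\sigma$ which is not a cycle of $\pi$, all other non-trivial cycles of $\sigma$ being cycles of $\pi$. This exceptional cycle can be written as $(y_1\,\ldots\,y_t)$ with $t\geqslant 2$ in such a way that $\pi$ has a cycle $(y_1\,\ldots\,y_t\,y_{t+1}\,\ldots\,y_{t+s})$ for some $s\geqslant 1$.
   Context: $\mathrm{Sym}_n$ is the symmetric group on $[n]$, and $w_H(\pi)=|\{i:\pi(i)\neq i\}|$. $Tc(\pi)=\{(i,\pi(i)):\pi(i)\neq i\}$. For $\pi$ with $w_H(\pi)=2r-1$, $N_3(\pi)=\{\sigma\in\mathrm{Sym}_n:|Tc(\sigma)\cap Tc(\pi)|=r-1,\ |Tc(\sigma)|=r\}$. *)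

theory Defs
  imports "HOL-Combinatorics.Permutations"
begin

text \<open>Sym_n is modelled as the functions nat => nat that permute {1..n}.\<close>

definition wH :: "nat \<Rightarrow> (nat \<Rightarrow> nat) \<Rightarrow> nat" where
  "wH n \<pi> = card {i \<in> {1..n}. \<pi> i \<noteq> i}"

definition Tc :: "nat \<Rightarrow> (nat \<Rightarrow> nat) \<Rightarrow> (nat \<times> nat) set" where
  "Tc n \<pi> = {(i, \<pi> i) | i. i \<in> {1..n} \<and> \<pi> i \<noteq> i}"

definition N3 :: "nat \<Rightarrow> nat \<Rightarrow> (nat \<Rightarrow> nat) \<Rightarrow> (nat \<Rightarrow> nat) set" where
  "N3 n r \<pi> = {\<sigma>. \<sigma> permutes {1..n} \<and> card (Tc n \<sigma> \<inter> Tc n \<pi>) = r - 1 \<and> card (Tc n \<sigma>) = r}"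

definition is_cycle_of :: "(nat \<Rightarrow> nat) \<Rightarrow> nat list \<Rightarrow> bool" where
  "is_cycle_of \<pi> ys \<longleftrightarrow> length ys \<ge> 2 \<and> distinct ys \<and>
     (\<forall>i < length ys. \<pi> (ys ! i) = ys ! ((i + 1) mod length ys))"

text \<open>Supports of the non-trivial cycles of \<pi> (a cycle is determined by its support and \<pi>).\<close>
definition ncycles :: "(nat \<Rightarrow> nat) \<Rightarrow> nat set set" where
  "ncycles \<pi> = {set ys | ys. is_cycle_of \<pi> ys}"

text \<open>The cycle of \<sigma> with support C is also a cycle of \<pi>.\<close>
definition cycle_shared :: "(nat \<Rightarrow> nat) \<Rightarrow> (nat \<Rightarrow> nat) \<Rightarrow> nat set \<Rightarrow> bool" where
  "cycle_shared \<sigma> \<pi> C \<longleftrightarrow> (\<forall>x \<in> C. \<sigma> x = \<pi> x)"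

end

theory Submission imports Defs "HOL-Combinatorics.Cycles" begin

lemma orbit_list:
  assumes p: "f permutes {1..n::nat}" and fy: "f y \<noteq> y"
  obtains L where "L \<ge> 2" "is_cycle_of f (map (\<lambda>i. (f^^i) y) [0..<L])" "(f^^L) y = y"
proof -
  have "permutation f" using p permutation_permutes by blast
  then obtain m where m: "(f^^m) = id" "m > 0" by (rule permutation_is_nilpotent)
  define L where "L = (LEAST k. 0 < k \<and> (f^^k) y = y)"
  have ex: "0 < m \<and> (f^^m) y = y" using m by simp
  have L1: "0 < L \<and> (f^^L) y = y" unfolding L_def by (rule LeastI[of _ m], rule ex)
  have Lmin: "\<And>k. 0 < k \<Longrightarrow> k < L \<Longrightarrow> (f^^k) y \<noteq> y"
    using not_less_Least L_def by blast
  have L2: "L \<ge> 2"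
  proof (rule ccontr)
    assume "\<not> L \<ge> 2" then have "L = 1" using L1 by linarith
    then show False using L1 fy by simp
  qed
  have inj: "inj f" using p permutes_inj by blast
  have injk: "\<And>k. inj (f^^k)" using inj inj_fn by blast
  have dist: "distinct (map (\<lambda>i. (f^^i) y) [0..<L])"
  proof (subst distinct_conv_nth, intro allI impI)
    fix i j assume ij: "i < length (map (\<lambda>i. (f^^i) y) [0..<L])" "j < length (map (\<lambda>i. (f^^i) y) [0..<L])" "i \<noteq> j"
    show "map (\<lambda>i. (f^^i) y) [0..<L] ! i \<noteq> map (\<lambda>i. (f^^i) y) [0..<L] ! j"
    proof
      assume eq: "map (\<lambda>i. (f^^i) y) [0..<L] ! i = map (\<lambda>i. (f^^i) y) [0..<L] ! j"
      have "(f^^i) y = (f^^j) y" using eq ij by simp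
      moreover have "\<And>a b. a < b \<Longrightarrow> b < L \<Longrightarrow> (f^^a) y = (f^^b) y \<Longrightarrow> False"
      proof -
        fix a b assume ab: "a < b" "b < L" "(f^^a) y = (f^^b) y"
        have "(f^^b) y = (f^^a) ((f^^(b-a)) y)" using ab(1)
          by (metis funpow_add le_add_diff_inverse less_imp_le o_apply)
        then have "(f^^(b-a)) y = y" using ab(3) injk[of a] by (metis injD)
        then show False using Lmin[of "b-a"] ab by simp
      qed
      moreover have "i < L" "j < L" using ij by auto
      ultimately show False using ij(3) by (metis linorder_neqE_nat)
    qed
  qed
  have cyc: "is_cycle_of f (map (\<lambda>i. (f^^i) y) [0..<L])"
    unfolding is_cycle_of_def
  proof (intro conjI allI impI)
    show "2 \<le> length (map (\<lambda>i. (f^^i) y) [0..<L])" using L2 by simp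
    show "distinct (map (\<lambda>i. (f^^i) y) [0..<L])" by (rule dist)
    fix i assume i: "i < length (map (\<lambda>i. (f^^i) y) [0..<L])"
    then have iL: "i < L" by simp
    show "f (map (\<lambda>i. (f^^i) y) [0..<L] ! i) = map (\<lambda>i. (f^^i) y) [0..<L] ! ((i + 1) mod length (map (\<lambda>i. (f^^i) y) [0..<L]))"
    proof (cases "i + 1 < L")
      case True then show ?thesis using iL by simp
    next
      case False then have "i + 1 = L" using iL by simp
      then have "f ((f^^i) y) = y" using L1 by (metis funpow.simps(2) o_apply Suc_eq_plus1)
      then show ?thesis using iL L1 L2 \<open>i + 1 = L\<close> by simp
    qed
  qed
  show ?thesis using that L2 cyc L1 by blast
qed

lemma cycle_pow:
  assumes "is_cycle_of f zs" "j < length zs"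
  shows "(f^^k) (zs!j) = zs!((j+k) mod length zs)"
proof (induction k)
  case 0 then show ?case using assms by (simp add: mod_less)
next
  case (Suc k)
  have L: "length zs > 0" "zs \<noteq> []" using assms(2) by auto
  have "(f^^Suc k) (zs!j) = f (zs!((j+k) mod length zs))" using Suc L by simp
  also have "\<dots> = zs!(((j+k) mod length zs + 1) mod length zs)"
    using assms(1) L unfolding is_cycle_of_def by simp
  also have "((j+k) mod length zs + 1) mod length zs = (j + Suc k) mod length zs"
    by (simp add: mod_Suc_eq)
  finally show ?case .
qed

lemma cycle_orbit:
  assumes "is_cycle_of f zs" "x \<in> set zs"
  shows "set zs = {(f^^k) x | k. True}"
proof -
  obtain j where j: "j < length zs" "zs!j = x" using assms(2) by (metis in_set_conv_nth)
  show ?thesis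
  proof
    show "set zs \<subseteq> {(f^^k) x | k. True}"
    proof
      fix z assume "z \<in> set zs"
      then obtain i where i: "i < length zs" "zs!i = z" by (metis in_set_conv_nth)
      have "(f^^(i + length zs - j)) x = zs!((j + (i + length zs - j)) mod length zs)"
        using cycle_pow[OF assms(1) j(1)] j(2) by simp
      also have "(j + (i + length zs - j)) mod length zs = i" using i j by simp
      finally show "z \<in> {(f^^k) x | k. True}" using i by auto
    qed
    show "{(f^^k) x | k. True} \<subseteq> set zs"
      using cycle_pow[OF assms(1) j(1)] j by (auto intro!: nth_mem mod_less_divisor)
  qed
qed

lemma cycle_same:
  assumes "is_cycle_of f zs" "is_cycle_of f ys" "x \<in> set zs" "x \<in> set ys"
  shows "set zs = set ys"
  using cycle_orbit[OF assms(1,3)] cycle_orbit[OF assms(2,4)] by simp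

lemma cycle_moved:
  assumes "is_cycle_of f zs" "z \<in> set zs"
  shows "f z \<noteq> z"
proof -
  obtain j where j: "j < length zs" "zs!j = z" using assms(2) by (metis in_set_conv_nth)
  have L: "length zs \<ge> 2" "distinct zs" using assms(1) unfolding is_cycle_of_def by auto
  have "f z = zs!((j+1) mod length zs)" using assms(1) j unfolding is_cycle_of_def by auto
  moreover have "(j+1) mod length zs \<noteq> j"
  proof (cases "j + 1 < length zs")
    case True then show ?thesis by simp
  next
    case False then have "j + 1 = length zs" using j(1) by simp
    then show ?thesis using L(1) by simp
  qed
  moreover have "(j+1) mod length zs < length zs" using j(1) by (intro mod_less_divisor) auto
  ultimately show ?thesis using nth_eq_iff_index_eq[OF L(2), of "(j+1) mod length zs" j] j by simp
qed

lemma moved_in: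
  assumes "f permutes {1..n::nat}" "f z \<noteq> z" shows "z \<in> {1..n}"
  using assms permutes_not_in by metis


lemma pow_pred: "L > 0 \<Longrightarrow> f ((f^^(L-1)) y) = (f^^L) y"
  by (cases L) auto

lemma N3_iff:
  assumes r: "r \<ge> 2" and ps: "\<sigma> permutes {1..n}" and w: "wH n \<sigma> = r"
  shows "\<sigma> \<in> N3 n r \<pi> \<longleftrightarrow> card {i \<in> {1..n}. \<sigma> i \<noteq> i \<and> \<sigma> i \<noteq> \<pi> i} = 1"
proof -
  define M where "M = {i \<in> {1..n}. \<sigma> i \<noteq> i}"
  define E where "E = {i \<in> {1..n}. \<sigma> i \<noteq> i \<and> \<sigma> i = \<pi> i}"
  define D where "D = {i \<in> {1..n}. \<sigma> i \<noteq> i \<and> \<sigma> i \<noteq> \<pi> i}"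
  have inj: "inj (\<lambda>i. (i, \<sigma> i))" by (auto intro: injI)
  have T1: "Tc n \<sigma> = (\<lambda>i. (i, \<sigma> i)) ` M" unfolding Tc_def M_def by auto
  have T2: "Tc n \<sigma> \<inter> Tc n \<pi> = (\<lambda>i. (i, \<sigma> i)) ` E" unfolding Tc_def E_def by auto
  have cM: "card M = r" using w unfolding wH_def M_def by simp
  have c1: "card (Tc n \<sigma>) = r" using T1 cM card_image[OF inj_on_subset[OF inj subset_UNIV]] by simp
  have c2: "card (Tc n \<sigma> \<inter> Tc n \<pi>) = card E" using T2 card_image[OF inj_on_subset[OF inj subset_UNIV]] by simp
  have "M = E \<union> D" "E \<inter> D = {}" "finite E" "finite D" unfolding M_def E_def D_def by auto
  then have "card E + card D = r" using cM card_Un_disjoint[of E D] by simp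
  then have "card E = r - 1 \<longleftrightarrow> card D = 1" using r by linarith
  then show ?thesis unfolding N3_def using c1 c2 ps D_def by simp
qed

theorem lemma12:
  fixes n r :: nat and \<pi> \<sigma> :: "nat \<Rightarrow> nat"
  assumes "r \<ge> 2" and "n \<ge> 2 * r - 1"
    and "\<pi> permutes {1..n}" and "\<sigma> permutes {1..n}"
    and "wH n \<pi> = 2 * r - 1" and "wH n \<sigma> = r"
  shows "\<sigma> \<in> N3 n r \<pi> \<longleftrightarrow>
    (\<exists>!C. C \<in> ncycles \<sigma> \<and> \<not> cycle_shared \<sigma> \<pi> C) \<and>
    (\<forall>C \<in> ncycles \<sigma>. \<not> cycle_shared \<sigma> \<pi> C \<longrightarrow>
       (\<exists>ys t s. t \<ge> 2 \<and> s \<ge> 1 \<and> length ys = t + s \<and>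
          is_cycle_of \<pi> ys \<and> is_cycle_of \<sigma> (take t ys) \<and> C = set (take t ys)))"
proof -
  note pp = assms(3) and ps = assms(4)
  define D where "D = {i \<in> {1..n}. \<sigma> i \<noteq> i \<and> \<sigma> i \<noteq> \<pi> i}"
  have injs: "inj \<sigma>" using ps permutes_inj by blast
  have injp: "inj \<pi>" using pp permutes_inj by blast
  have iff: "\<sigma> \<in> N3 n r \<pi> \<longleftrightarrow> card D = 1" using N3_iff[OF assms(1) ps assms(6)] D_def by simp
  have inD: "\<And>z. \<sigma> z \<noteq> z \<Longrightarrow> \<sigma> z \<noteq> \<pi> z \<Longrightarrow> z \<in> D"
    unfolding D_def using moved_in[OF ps] by blast
  have cyc_of: "\<And>z. \<sigma> z \<noteq> z \<Longrightarrow> \<exists>C \<in> ncycles \<sigma>. z \<in> C"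
  proof -
    fix z assume "\<sigma> z \<noteq> z"
    then obtain L where L: "L \<ge> 2" "is_cycle_of \<sigma> (map (\<lambda>i. (\<sigma>^^i) z) [0..<L])"
      using orbit_list[OF ps] by blast
    have "(\<sigma>^^0) z \<in> (\<lambda>i. (\<sigma>^^i) z) ` {0..<L}" using L(1) by (intro imageI) simp
    then have "z \<in> set (map (\<lambda>i. (\<sigma>^^i) z) [0..<L])" by simp
    then show "\<exists>C \<in> ncycles \<sigma>. z \<in> C" using L(2) unfolding ncycles_def by blast
  qed
  show ?thesis
  proof
    assume "\<sigma> \<in> N3 n r \<pi>"
    then have "card D = 1" using iff by simp
    then obtain x where Dx: "D = {x}" by (auto simp: card_1_singleton_iff)
    then have "x \<in> D" by simp
    then have x: "\<sigma> x \<noteq> x" "\<sigma> x \<noteq> \<pi> x" unfolding D_def by simp_all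
    define y where "y = \<sigma> x"
    have sy: "\<sigma> y \<noteq> y"
    proof
      assume "\<sigma> y = y"
      then have "\<sigma> (\<sigma> x) = \<sigma> x" using y_def by simp
      then have "\<sigma> x = x" using injD[OF injs] by blast
      then show False using x(1) by simp
    qed
    obtain L where L: "L \<ge> 2" "is_cycle_of \<sigma> (map (\<lambda>i. (\<sigma>^^i) y) [0..<L])" "(\<sigma>^^L) y = y"
      by (rule orbit_list[OF ps sy])
    define ys where "ys = map (\<lambda>i. (\<sigma>^^i) y) [0..<L]"
    have lys: "length ys = L" unfolding ys_def by simp
    have dys: "distinct ys" using L(2) unfolding ys_def is_cycle_of_def by simp
    have ysi: "\<And>i. i < L \<Longrightarrow> ys!i = (\<sigma>^^i) y" unfolding ys_def by simp
    have "\<sigma> ((\<sigma>^^(L-1)) y) = (\<sigma>^^L) y" using L(1) pow_pred[of L] by simp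
    then have "\<sigma> ((\<sigma>^^(L-1)) y) = \<sigma> x" using L(3) y_def by simp
    then have xL: "(\<sigma>^^(L-1)) y = x" using injD[OF injs] by blast
    have "ys!(L-1) \<in> set ys" using L(1) lys by (intro nth_mem) simp
    then have xin: "x \<in> set ys" using xL ysi[of "L-1"] L(1) by simp
    define C0 where "C0 = set ys"
    have C0in: "C0 \<in> ncycles \<sigma>" unfolding C0_def ncycles_def ys_def using L(2) by blast
    have C0ns: "\<not> cycle_shared \<sigma> \<pi> C0" unfolding cycle_shared_def C0_def using xin x(2) by blast
    have K: "\<And>C. C \<in> ncycles \<sigma> \<Longrightarrow> \<not> cycle_shared \<sigma> \<pi> C \<Longrightarrow> C = C0"
    proof -
      fix C assume C: "C \<in> ncycles \<sigma>" "\<not> cycle_shared \<sigma> \<pi> C"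
      then obtain zs where zs: "is_cycle_of \<sigma> zs" "C = set zs" unfolding ncycles_def by blast
      then obtain z where z: "z \<in> set zs" "\<sigma> z \<noteq> \<pi> z" using C(2) unfolding cycle_shared_def by blast
      have "z \<in> D" using inD[OF cycle_moved[OF zs(1) z(1)] z(2)] .
      then have "z = x" using Dx by simp
      then show "C = C0" using cycle_same[OF zs(1) L(2)] z(1) xin zs(2) C0_def ys_def by simp
    qed
    have P: "\<And>i. i \<le> L - 1 \<Longrightarrow> (\<pi>^^i) y = (\<sigma>^^i) y"
    proof -
      fix i show "i \<le> L - 1 \<Longrightarrow> (\<pi>^^i) y = (\<sigma>^^i) y"
      proof (induction i)
        case 0 then show ?case by simp
      next
        case (Suc i)
        have iL: "i < L - 1" using Suc.prems by simp
        have e: "ys!i = (\<sigma>^^i) y" using ysi iL by simp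
        have "ys!i \<noteq> ys!(L-1)" using dys iL lys nth_eq_iff_index_eq[OF dys] by simp
        then have ne: "(\<sigma>^^i) y \<noteq> x" using e xL ysi[of "L-1"] L(1) by simp
        have "ys!i \<in> set ys" using iL lys by (intro nth_mem) simp
        then have inys: "(\<sigma>^^i) y \<in> set ys" using e by simp
        have mv: "\<sigma> ((\<sigma>^^i) y) \<noteq> (\<sigma>^^i) y" using cycle_moved[OF L(2)] inys ys_def by simp
        have "\<sigma> ((\<sigma>^^i) y) = \<pi> ((\<sigma>^^i) y)"
        proof (rule ccontr)
          assume "\<sigma> ((\<sigma>^^i) y) \<noteq> \<pi> ((\<sigma>^^i) y)"
          then have "(\<sigma>^^i) y \<in> D" using inD mv by blast
          then show False using Dx ne by simp
        qed
        then show ?case using Suc.IH iL by simp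
      qed
    qed
    have py: "\<pi> y \<noteq> y" using P[of 1] L(1) sy by simp
    obtain L' where L': "L' \<ge> 2" "is_cycle_of \<pi> (map (\<lambda>i. (\<pi>^^i) y) [0..<L'])" "(\<pi>^^L') y = y"
      by (rule orbit_list[OF pp py])
    define zs where "zs = map (\<lambda>i. (\<pi>^^i) y) [0..<L']"
    have dzs: "distinct zs" using L'(2) unfolding zs_def is_cycle_of_def by simp
    have LL: "L < L'"
    proof (rule ccontr)
      assume "\<not> L < L'"
      then consider "L' < L" | "L' = L" by linarith
      then show False
      proof cases
        case 1
        then have "(\<sigma>^^L') y = y" using P[of L'] L'(3) by simp
        then have "ys!L' = ys!0" using ysi[of L'] ysi[of 0] 1 L(1) by simp
        then show False using nth_eq_iff_index_eq[OF dys] 1 lys L'(1) by simp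
      next
        case 2
        have "(\<pi>^^L') y = \<pi> ((\<pi>^^(L-1)) y)" using 2 L(1) pow_pred[of L \<pi> y] by simp
        also have "\<dots> = \<pi> x" using P[of "L-1"] xL by simp
        finally show False using L'(3) x(2) y_def by simp
      qed
    qed
    have tk: "take L zs = ys"
      by (rule nth_equalityI) (use LL P in \<open>auto simp: zs_def ys_def\<close>)
    have ex: "\<exists>ys t s. t \<ge> 2 \<and> s \<ge> 1 \<and> length ys = t + s \<and>
          is_cycle_of \<pi> ys \<and> is_cycle_of \<sigma> (take t ys) \<and> C0 = set (take t ys)"
      apply (rule exI[of _ zs], rule exI[of _ L], rule exI[of _ "L' - L"])
      using L(1) LL L'(2) tk L(2) unfolding zs_def[symmetric] ys_def[symmetric] C0_def
      by (simp add: zs_def)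
    show "(\<exists>!C. C \<in> ncycles \<sigma> \<and> \<not> cycle_shared \<sigma> \<pi> C) \<and>
    (\<forall>C \<in> ncycles \<sigma>. \<not> cycle_shared \<sigma> \<pi> C \<longrightarrow>
       (\<exists>ys t s. t \<ge> 2 \<and> s \<ge> 1 \<and> length ys = t + s \<and>
          is_cycle_of \<pi> ys \<and> is_cycle_of \<sigma> (take t ys) \<and> C = set (take t ys)))"
      using K C0in C0ns ex by blast
  next
    assume R: "(\<exists>!C. C \<in> ncycles \<sigma> \<and> \<not> cycle_shared \<sigma> \<pi> C) \<and>
    (\<forall>C \<in> ncycles \<sigma>. \<not> cycle_shared \<sigma> \<pi> C \<longrightarrow>
       (\<exists>ys t s. t \<ge> 2 \<and> s \<ge> 1 \<and> length ys = t + s \<and>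
          is_cycle_of \<pi> ys \<and> is_cycle_of \<sigma> (take t ys) \<and> C = set (take t ys)))"
    then obtain C0 where C0: "C0 \<in> ncycles \<sigma>" "\<not> cycle_shared \<sigma> \<pi> C0"
      and U: "\<And>C. C \<in> ncycles \<sigma> \<Longrightarrow> \<not> cycle_shared \<sigma> \<pi> C \<Longrightarrow> C = C0" by blast
    then obtain ys t s where st: "t \<ge> 2" "s \<ge> 1" "length ys = t + s"
      "is_cycle_of \<pi> ys" "is_cycle_of \<sigma> (take t ys)" "C0 = set (take t ys)" using R by blast
    define x where "x = ys!(t-1)"
    have dys: "distinct ys" using st(4) unfolding is_cycle_of_def by simp
    have ltk: "length (take t ys) = t" using st(1-3) by simp
    have tki: "\<And>j. j < t \<Longrightarrow> take t ys ! j = ys ! j" by simp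
    have "take t ys ! (t-1) \<in> set (take t ys)" using ltk st(1) by (intro nth_mem) simp
    then have xin: "x \<in> set (take t ys)" using tki[of "t-1"] st(1) x_def by simp
    have sx: "\<sigma> x = ys!0"
      using st(5) st(1) ltk tki[of "t-1"] tki[of 0] x_def unfolding is_cycle_of_def by auto
    have px: "\<pi> x = ys!t"
      using st(4) st(1-3) x_def unfolding is_cycle_of_def by auto
    have "ys!0 \<noteq> ys!t" using nth_eq_iff_index_eq[OF dys] st(1-3) by simp
    then have xne: "\<sigma> x \<noteq> \<pi> x" using sx px by simp
    have xD: "x \<in> D" using inD[OF cycle_moved[OF st(5) xin] xne] .
    have "D = {x}"
    proof (intro equalityI subsetI)
      fix i assume "i \<in> D"
      then have i: "\<sigma> i \<noteq> i" "\<sigma> i \<noteq> \<pi> i" unfolding D_def by auto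
      obtain C where C: "C \<in> ncycles \<sigma>" "i \<in> C" using cyc_of[OF i(1)] by blast
      have "\<not> cycle_shared \<sigma> \<pi> C" using C(2) i(2) unfolding cycle_shared_def by blast
      then have "C = C0" using U C(1) by blast
      then obtain j where j: "j < t" "i = ys!j" using C(2) st(6) ltk tki by (metis in_set_conv_nth)
      show "i \<in> {x}"
      proof (cases "j < t - 1")
        case True
        have "\<sigma> i = ys!(j+1)"
          using st(5) j ltk tki[of j] tki[of "j+1"] True unfolding is_cycle_of_def by auto
        moreover have "\<pi> i = ys!(j+1)"
          using st(4) j st(3) True unfolding is_cycle_of_def by auto
        ultimately show ?thesis using i(2) by simp
      next
        case False then have "j = t - 1" using j by simp
        then show ?thesis using j x_def by simp
      qed
    qed (use xD in simp)
    then show "\<sigma> \<in> N3 n r \<pi>" using iff by simp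
  qed
qed

end
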